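(* Let $\beta$ be a unital *-endomorphism of $\mathcal M$ that is localized in $I_\circ$ and transportable, i.e. for each $I_1\in\mathcal J_z$ there is a unitary $Q_{\beta;I_\circ,I_1}\in\mathcal M$ with $\mathrm{Ad}(Q_{\beta;I_\circ,I_1})\circ\beta$ localized in $I_1$. Then $\sigma_\beta\in\Delta_{\mathcal N}(I_\circ)$. More precisely, for every $I_1\in\mathcal J_z$, if $u_{\theta;I_\circ,I_1}\in\mathcal N$ is a unitary with $\mathrm{Ad}(u_{\theta;I_\circ,I_1})\circ\theta$ localized in $I_1$, then $\mathrm{Ad}(u_{\theta;I_\circ,I_1}\,\gamma(Q_{\beta;I_\circ,I_1}))\circ\sigma_\beta$ is localized in $I_1$.
   Context: Standing setting. Fix $z\in S^1$; $\mathcal J_z$ is the set of nonempty open intervals $I\subset S^1$ whose closure does not contain $z$; $I'$ denotes the interior of the complement of $I$. $\mathcal N\subset\mathcal M$ is a quantum field theoretical net of subfactors over $\mathcal J_z$: to each $I\in\mathcal J_z$ are assigned von Neumann factors $N(I)\subset M(I)$ on a separable Hilbert space $\mathcal H$, isotone in $I$; there is a vector $\Omega$ cyclic and separating for every $M(I)$ on $\mathcal H$ and for every $N(I)$ on $\mathcal H_0=\overline{\mathcal N\Omega}$; there are faithful normal conditional expectations $E_I:M(I)\to N(I)$ preserving $\langle\Omega,\cdot\,\Omega\rangle$ with $E_J|_{M(I)}=E_I$ for $I\subset J$; and $N(I_1)\subset M(I_2)'$ whenever $I_1\cap I_2=\emptyset$. $\mathcal N,\mathcal M$ also denote the C*-algebras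 (norm closures of unions). Assume: $\mathcal M$ is local; $[M:N]=[M(I):N(I)]<\infty$; with $\pi_0$ the representation of $\mathcal N$ on $\mathcal H_0$ and $A(I)=\pi_0(N(I))$, the net $\mathcal A$ is Haag dual, $A(I)=\mathcal C_{\mathcal A}(I')'$ ($\mathcal C_{\mathcal A}(R)$ = norm closure of $\bigcup\{A(J):J\subset R\}$), and strongly additive. An endomorphism of $\mathcal N$ (resp. $\mathcal M$) is localized in $I$ if it acts trivially on $N(J)$ (resp. $M(J)$) for all $J\in\mathcal J_z$, $J\subset I'$. $\Delta_{\mathcal N}(I)$: unital *-endomorphisms of $\mathcal N$ localized in $I$ and transportable (for each $J\in\mathcal J_z$ a unitary $u\in\mathcal N$ with $\mathrm{Ad}(u)\circ\lambda$ localized in $J$). Canonical endomorphism: fix $I_\circ$. $\gamma$ is an endomorphism of $\mathcal M$ with $\gamma(\mathcal M)\subset\mathcal N$ restricting to a canonical endomorphism of $M(I)$ into $N(I)$ for all $I\supset I_\circ$; $\theta=\gamma|_{\mathcal N}\in\Delta_{\mathcal N}(I_\circ)$. $\sigma$-restriction: for an endomorphism $\beta$ of $\mathcal M$, $\sigma_\beta=\gamma\circ\beta|_{\mathcal N}$. *)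

theory Defs
  imports "HOL-Analysis.Analysis"
begin

definition S1 :: "complex set" where
  "S1 = sphere 0 1"

definition arc :: "complex set \<Rightarrow> bool" where
  "arc I \<longleftrightarrow> (\<exists>a b::real. a < b \<and> b - a < 2 * pi \<and> I = cis ` {a<..<b})"

definition Jz :: "complex \<Rightarrow> complex set set" where
  "Jz z = {I. arc I \<and> z \<notin> closure I}"

definition compl_int :: "complex set \<Rightarrow> complex set" where
  "compl_int I = (top_of_set S1) interior_of (S1 - I)"

text \<open>The ambient algebra is an abstract real normed unital algebra 'a with an
involution st and a central element ii playing the role of the imaginary unit i1;
complex scalars are a *R 1 + b *R ii.\<close>
definition star_algebra :: "('a::real_normed_algebra_1 \<Rightarrow> 'a) \<Rightarrow> 'a \<Rightarrow> bool" where
  "star_algebra st ii \<longleftrightarrow>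
     (\<forall>x. st (st x) = x) \<and> (\<forall>x y. st (x + y) = st x + st y) \<and>
     (\<forall>x y. st (x * y) = st y * st x) \<and> (\<forall>r x. st (r *\<^sub>R x) = r *\<^sub>R st x) \<and>
     ii * ii = - 1 \<and> st ii = - ii \<and> (\<forall>x. ii * x = x * ii) \<and>
     (\<forall>x. norm (st x * x) = (norm x)\<^sup>2)"

definition star_subalgebra :: "('a::real_normed_algebra_1 \<Rightarrow> 'a) \<Rightarrow> 'a \<Rightarrow> 'a set \<Rightarrow> bool" where
  "star_subalgebra st ii A \<longleftrightarrow> 1 \<in> A \<and> ii \<in> A \<and>
     (\<forall>x\<in>A. \<forall>y\<in>A. x + y \<in> A \<and> x * y \<in> A) \<and>
     (\<forall>x\<in>A. \<forall>r. r *\<^sub>R x \<in> A) \<and> (\<forall>x\<in>A. st x \<in> A)"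

definition is_factor :: "'a::real_normed_algebra_1 \<Rightarrow> 'a set \<Rightarrow> bool" where
  "is_factor ii A \<longleftrightarrow> (\<forall>x\<in>A. (\<forall>y\<in>A. x * y = y * x) \<longrightarrow>
       (\<exists>a b. x = a *\<^sub>R 1 + b *\<^sub>R ii))"

definition star_endo :: "('a::real_normed_algebra_1 \<Rightarrow> 'a) \<Rightarrow> 'a \<Rightarrow> 'a set \<Rightarrow> ('a \<Rightarrow> 'a) \<Rightarrow> bool" where
  "star_endo st ii A f \<longleftrightarrow> (\<forall>x\<in>A. f x \<in> A) \<and>
     (\<forall>x\<in>A. \<forall>y\<in>A. f (x + y) = f x + f y \<and> f (x * y) = f x * f y) \<and>
     (\<forall>x\<in>A. \<forall>r. f (r *\<^sub>R x) = r *\<^sub>R f x) \<and> (\<forall>x\<in>A. f (ii * x) = ii * f x) \<and>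
     (\<forall>x\<in>A. f (st x) = st (f x)) \<and> f 1 = 1"

definition unitary_in :: "('a::real_normed_algebra_1 \<Rightarrow> 'a) \<Rightarrow> 'a set \<Rightarrow> 'a \<Rightarrow> bool" where
  "unitary_in st A u \<longleftrightarrow> u \<in> A \<and> st u * u = 1 \<and> u * st u = 1"

definition Ad :: "('a::real_normed_algebra_1 \<Rightarrow> 'a) \<Rightarrow> 'a \<Rightarrow> 'a \<Rightarrow> 'a" where
  "Ad st u x = u * x * st u"

definition quasilocal :: "complex \<Rightarrow> (complex set \<Rightarrow> 'a::real_normed_algebra_1 set) \<Rightarrow> 'a set" where
  "quasilocal z A = closure (\<Union>I\<in>Jz z. A I)"

definition localized_in :: "complex \<Rightarrow> (complex set \<Rightarrow> 'a set) \<Rightarrow> ('a \<Rightarrow> 'a) \<Rightarrow> complex set \<Rightarrow> bool" where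
  "localized_in z A f I \<longleftrightarrow> (\<forall>J\<in>Jz z. J \<subseteq> compl_int I \<longrightarrow> (\<forall>x\<in>A J. f x = x))"

definition Delta :: "('a::real_normed_algebra_1 \<Rightarrow> 'a) \<Rightarrow> 'a \<Rightarrow> complex \<Rightarrow> (complex set \<Rightarrow> 'a set)
     \<Rightarrow> complex set \<Rightarrow> ('a \<Rightarrow> 'a) set" where
  "Delta st ii z A I = {l. star_endo st ii (quasilocal z A) l \<and> localized_in z A l I \<and>
      (\<forall>J\<in>Jz z. \<exists>u. unitary_in st (quasilocal z A) u \<and> localized_in z A (Ad st u \<circ> l) J)}"

text \<open>Algebraic part of a QFT net of subfactors N \<subseteq> M over J_z, with M local.\<close>
definition net_of_subfactors :: "('a::real_normed_algebra_1 \<Rightarrow> 'a) \<Rightarrow> 'a \<Rightarrow> complex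
     \<Rightarrow> (complex set \<Rightarrow> 'a set) \<Rightarrow> (complex set \<Rightarrow> 'a set) \<Rightarrow> bool" where
  "net_of_subfactors st ii z N M \<longleftrightarrow> star_algebra st ii \<and> z \<in> S1 \<and>
     (\<forall>I\<in>Jz z. star_subalgebra st ii (N I) \<and> star_subalgebra st ii (M I) \<and>
                is_factor ii (N I) \<and> is_factor ii (M I) \<and> N I \<subseteq> M I) \<and>
     (\<forall>I\<in>Jz z. \<forall>J\<in>Jz z. I \<subseteq> J \<longrightarrow> N I \<subseteq> N J \<and> M I \<subseteq> M J) \<and>
     (\<forall>I1\<in>Jz z. \<forall>I2\<in>Jz z. I1 \<inter> I2 = {} \<longrightarrow>
        (\<forall>x\<in>N I1. \<forall>y\<in>M I2. x * y = y * x) \<and> (\<forall>x\<in>M I1. \<forall>y\<in>M I2. x * y = y * x))"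

end

theory Submission
  imports Defs
begin

lemma cis_closure_sub: assumes "a < b" shows "cis ` {a..b} \<subseteq> closure (cis ` {a<..<b})"
proof -
  have "cis ` closure {a<..<b} \<subseteq> closure (cis ` {a<..<b})"
    by (rule image_closure_subset) (auto intro!: continuous_intros closure_subset)
  thus ?thesis using assms by simp
qed

lemma cis_closure_sup: "closure (cis ` {a<..<b}) \<subseteq> cis ` {a..b}"
proof (rule closure_minimal)
  show "cis ` {a<..<b} \<subseteq> cis ` {a..b}" by auto
  show "closed (cis ` {a..b})"
    by (intro compact_imp_closed compact_continuous_image) (auto intro!: continuous_intros)
qed

lemma cis_eq_imp: assumes "cis t = cis c" shows "\<exists>n::int. t - c = of_int n * 2 * pi"
proof -
  have "cis (t - c) = 1" using assms by (simp flip: cis_divide)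
  hence "cos (t - c) = 1" by (metis cis.sel(1) one_complex.sel(1))
  thus ?thesis using cos_one_2pi_int by blast
qed

lemma cis_shift: "cis (t + of_int k * 2 * pi) = cis t"
proof -
  have "cis (of_int k * 2 * pi) = 1"
    using cis_multiple_2pi[of "of_int k"] by (simp add: mult.commute mult.left_commute)
  thus ?thesis by (simp flip: cis_mult)
qed

lemma arc_normalize:
  assumes ab: "a < b" "b - a < 2*pi" and z: "cis c \<notin> cis ` {a..b}"
  shows "\<exists>a' b'. c < a' \<and> a' < b' \<and> b' < c + 2*pi \<and> cis ` {a<..<b} = cis ` {a'<..<b'}"
proof -
  define k where "k = \<lfloor>(a - c) / (2*pi)\<rfloor>"
  define a' where "a' = a - of_int k * 2 * pi"
  define b' where "b' = b - of_int k * 2 * pi"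
  have f1: "of_int k \<le> (a - c) / (2*pi)" "(a - c) / (2*pi) < of_int k + 1"
    unfolding k_def by linarith+
  have p: "pi > 0" by simp
  have "of_int k * (2*pi) \<le> a - c" using f1(1) p by (simp add: pos_le_divide_eq)
  hence c1: "c \<le> a'" unfolding a'_def by simp
  have "a - c < (of_int k + 1) * (2*pi)" using f1(2) p by (simp add: pos_divide_less_eq)
  hence c2: "a' < c + 2*pi" unfolding a'_def by (simp add: algebra_simps)
  have ne1: "c \<noteq> a'"
  proof
    assume "c = a'"
    hence "cis c = cis a" unfolding a'_def using cis_shift[of a "-k"] by simp
    thus False using z ab by auto
  qed
  have ne2: "b' < c + 2*pi"
  proof (rule ccontr)
    assume "\<not> ?thesis"
    hence "c + 2*pi + of_int k * 2 * pi \<in> {a..b}" using c2 unfolding a'_def b'_def by auto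
    moreover have "cis (c + 2*pi + of_int k * 2 * pi) = cis c"
      using cis_shift[of c "k+1"] by (simp add: algebra_simps)
    ultimately show False using z by (metis image_eqI)
  qed
  have eq: "cis ` {a<..<b} = cis ` {a'<..<b'}"
  proof safe
    fix t assume "t \<in> {a<..<b}"
    hence "t - of_int k * 2 * pi \<in> {a'<..<b'}" unfolding a'_def b'_def by auto
    moreover have "cis t = cis (t - of_int k * 2 * pi)" using cis_shift[of "t - of_int k * 2 * pi" k] by simp
    ultimately show "cis t \<in> cis ` {a'<..<b'}" by blast
  next
    fix t assume "t \<in> {a'<..<b'}"
    hence "t + of_int k * 2 * pi \<in> {a<..<b}" unfolding a'_def b'_def by auto
    moreover have "cis t = cis (t + of_int k * 2 * pi)" using cis_shift[of t k] by simp
    ultimately show "cis t \<in> cis ` {a<..<b}" by blast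
  qed
  have "c < a'" using c1 ne1 by simp
  moreover have "a' < b'" unfolding a'_def b'_def using ab by simp
  ultimately show ?thesis using ne2 eq by blast
qed

lemma Jz_directed:
  assumes z: "z \<in> S1" and I1: "I1 \<in> Jz z" and I2: "I2 \<in> Jz z"
  shows "\<exists>J\<in>Jz z. I1 \<subseteq> J \<and> I2 \<subseteq> J"
proof -
  have "norm z = 1" using z by (simp add: S1_def)
  hence "z \<noteq> 0" by auto
  hence zc: "z = cis (Arg z)" using \<open>norm z = 1\<close> by (simp add: cis_Arg sgn_div_norm)
  define c where "c = Arg z"
  have norm: "\<exists>a' b'. c < a' \<and> a' < b' \<and> b' < c + 2*pi \<and> I = cis ` {a'<..<b'}" if "I \<in> Jz z" for I
  proof -
    from that obtain a b where ab: "a < b" "b - a < 2*pi" "I = cis ` {a<..<b}" "z \<notin> closure I"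
      by (auto simp: Jz_def arc_def)
    have "cis c \<notin> cis ` {a..b}" using ab cis_closure_sub[of a b] zc c_def by auto
    from arc_normalize[OF ab(1,2) this] ab(3) show ?thesis by blast
  qed
  obtain a1 b1 where 1: "c < a1" "a1 < b1" "b1 < c + 2*pi" "I1 = cis ` {a1<..<b1}" using norm[OF I1] by blast
  obtain a2 b2 where 2: "c < a2" "a2 < b2" "b2 < c + 2*pi" "I2 = cis ` {a2<..<b2}" using norm[OF I2] by blast
  define m where "m = min a1 a2"
  define M where "M = max b1 b2"
  have mM: "c < m" "m < M" "M < c + 2*pi" using 1 2 unfolding m_def M_def by auto
  define J where "J = cis ` {m<..<M}"
  have "arc J" unfolding arc_def J_def using mM by (intro exI[of _ m] exI[of _ M]) auto
  moreover have "z \<notin> closure J"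
  proof
    assume "z \<in> closure J"
    then obtain t where t: "t \<in> {m..M}" "cis t = cis c" using cis_closure_sup[of m M] zc c_def J_def by auto
    then obtain n::int where n: "t - c = of_int n * 2 * pi" using cis_eq_imp by blast
    have e: "real_of_int n * (2*pi) = t - c" using n by simp
    have "0 < t - c" "t - c < 2*pi" using t mM by auto
    moreover have "real_of_int n \<le> 0 \<or> real_of_int n \<ge> 1" by (cases "n \<le> 0") auto
    moreover have "real_of_int n \<le> 0 \<Longrightarrow> real_of_int n * (2*pi) \<le> 0"
      by (simp add: mult_nonpos_nonneg)
    moreover have "real_of_int n \<ge> 1 \<Longrightarrow> 1 * (2*pi) \<le> real_of_int n * (2*pi)"
      by (intro mult_right_mono) auto
    ultimately show False using e by linarith
  qed
  moreover have "I1 \<subseteq> J" "I2 \<subseteq> J" unfolding J_def 1(4) 2(4) m_def M_def by (auto intro!: image_mono)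
  ultimately show ?thesis unfolding Jz_def by blast
qed

lemma st_diff: assumes "star_algebra st ii" shows "st (x - y) = st x - st y"
proof -
  have "st (x - y) + st y = st x" using assms unfolding star_algebra_def by (metis diff_add_cancel)
  thus ?thesis by (simp add: eq_diff_eq)
qed

lemma st_norm_le: assumes "star_algebra st ii" shows "norm x \<le> norm (st x)"
proof (cases "norm x = 0")
  case True thus ?thesis by simp
next
  case False
  have "(norm x)\<^sup>2 = norm (st x * x)" using assms unfolding star_algebra_def by simp
  also have "\<dots> \<le> norm (st x) * norm x" by (rule norm_mult_ineq)
  finally have "norm x * norm x \<le> norm (st x) * norm x" by (simp add: power2_eq_square)
  thus ?thesis using False by (simp add: mult_le_cancel_right)
qed

lemma st_norm: assumes "star_algebra st ii" shows "norm (st x) = norm x"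
proof -
  have "norm (st x) \<le> norm (st (st x))" by (rule st_norm_le[OF assms])
  also have "st (st x) = x" using assms unfolding star_algebra_def by simp
  finally show ?thesis using st_norm_le[OF assms, of x] by simp
qed

lemma st_bl: assumes "star_algebra st ii" shows "bounded_linear st"
  by (rule bounded_linear_intro[where K=1]) (use assms st_norm[OF assms] in \<open>auto simp: star_algebra_def\<close>)

lemma closure_binop:
  fixes f :: "'a::real_normed_vector \<Rightarrow> 'a \<Rightarrow> 'a"
  assumes c: "continuous_on UNIV (\<lambda>p. f (fst p) (snd p))" and U: "\<forall>x\<in>U. \<forall>y\<in>U. f x y \<in> U"
    and x: "x \<in> closure U" and y: "y \<in> closure U"
  shows "f x y \<in> closure U"
proof -
  have "(\<lambda>p. f (fst p) (snd p)) ` closure (U \<times> U) \<subseteq> closure U"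
    by (rule image_closure_subset) (use c U in \<open>auto intro: continuous_on_subset closure_subset[THEN subsetD]\<close>)
  moreover have "(x, y) \<in> closure (U \<times> U)" using x y by (simp add: closure_Times)
  ultimately show ?thesis by force
qed

lemma closure_unop:
  fixes f :: "'a::real_normed_vector \<Rightarrow> 'a"
  assumes c: "continuous_on UNIV f" and U: "\<forall>x\<in>U. f x \<in> U" and x: "x \<in> closure U"
  shows "f x \<in> closure U"
proof -
  have "f ` closure U \<subseteq> closure U"
    by (rule image_closure_subset) (use c U in \<open>auto intro: continuous_on_subset closure_subset[THEN subsetD]\<close>)
  thus ?thesis using x by blast
qed

lemma quasilocal_alg:
  fixes A :: "complex set \<Rightarrow> 'a::real_normed_algebra_1 set"
  assumes sa: "star_algebra st ii" and z: "z \<in> S1" and Io: "Io \<in> Jz z"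
    and sub: "\<forall>I\<in>Jz z. star_subalgebra st ii (A I)"
    and mono: "\<forall>I\<in>Jz z. \<forall>J\<in>Jz z. I \<subseteq> J \<longrightarrow> A I \<subseteq> A J"
  shows "1 \<in> quasilocal z A" "ii \<in> quasilocal z A"
    "\<And>x y. x \<in> quasilocal z A \<Longrightarrow> y \<in> quasilocal z A \<Longrightarrow> x + y \<in> quasilocal z A"
    "\<And>x y. x \<in> quasilocal z A \<Longrightarrow> y \<in> quasilocal z A \<Longrightarrow> x * y \<in> quasilocal z A"
    "\<And>x r. x \<in> quasilocal z A \<Longrightarrow> r *\<^sub>R x \<in> quasilocal z A"
    "\<And>x. x \<in> quasilocal z A \<Longrightarrow> st x \<in> quasilocal z A"
proof -
  define U where "U = (\<Union>I\<in>Jz z. A I)"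
  have Q: "quasilocal z A = closure U" unfolding U_def quasilocal_def ..
  have dir: "\<exists>J\<in>Jz z. x \<in> A J \<and> y \<in> A J" if xU: "x \<in> U" and yU: "y \<in> U" for x y
  proof -
    obtain I1 I2 where "I1 \<in> Jz z" "I2 \<in> Jz z" "x \<in> A I1" "y \<in> A I2" using xU yU unfolding U_def by blast
    moreover then obtain J where "J \<in> Jz z" "I1 \<subseteq> J" "I2 \<subseteq> J" using Jz_directed[OF z] by blast
    ultimately show ?thesis using mono by blast
  qed
  have addU: "\<forall>x\<in>U. \<forall>y\<in>U. x + y \<in> U"
  proof (intro ballI)
    fix x y assume "x \<in> U" "y \<in> U"
    then obtain J where "J \<in> Jz z" "x \<in> A J" "y \<in> A J" using dir by blast
    moreover have "star_subalgebra st ii (A J)" using sub \<open>J \<in> Jz z\<close> by blast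
    ultimately have "x + y \<in> A J" unfolding star_subalgebra_def by blast
    thus "x + y \<in> U" using \<open>J \<in> Jz z\<close> unfolding U_def by blast
  qed
  have mulU: "\<forall>x\<in>U. \<forall>y\<in>U. x * y \<in> U"
  proof (intro ballI)
    fix x y assume "x \<in> U" "y \<in> U"
    then obtain J where "J \<in> Jz z" "x \<in> A J" "y \<in> A J" using dir by blast
    moreover have "star_subalgebra st ii (A J)" using sub \<open>J \<in> Jz z\<close> by blast
    ultimately have "x * y \<in> A J" unfolding star_subalgebra_def by blast
    thus "x * y \<in> U" using \<open>J \<in> Jz z\<close> unfolding U_def by blast
  qed
  have scU: "\<forall>x\<in>U. r *\<^sub>R x \<in> U" for r
  proof
    fix x assume "x \<in> U"
    then obtain J where J: "J \<in> Jz z" "x \<in> A J" unfolding U_def by blast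
    hence "r *\<^sub>R x \<in> A J" using sub unfolding star_subalgebra_def by blast
    thus "r *\<^sub>R x \<in> U" using J unfolding U_def by blast
  qed
  have stU: "\<forall>x\<in>U. st x \<in> U"
  proof
    fix x assume "x \<in> U"
    then obtain J where J: "J \<in> Jz z" "x \<in> A J" unfolding U_def by blast
    hence "st x \<in> A J" using sub unfolding star_subalgebra_def by blast
    thus "st x \<in> U" using J unfolding U_def by blast
  qed
  have "1 \<in> A Io" "ii \<in> A Io" using sub Io unfolding star_subalgebra_def by blast+
  hence "1 \<in> U" "ii \<in> U" using Io unfolding U_def by blast+
  thus "1 \<in> quasilocal z A" "ii \<in> quasilocal z A" unfolding Q using closure_subset by blast+
  show "\<And>x y. x \<in> quasilocal z A \<Longrightarrow> y \<in> quasilocal z A \<Longrightarrow> x + y \<in> quasilocal z A"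
    unfolding Q by (rule closure_binop[where f="(+)"]) (use addU in \<open>auto intro!: continuous_intros\<close>)
  show "\<And>x y. x \<in> quasilocal z A \<Longrightarrow> y \<in> quasilocal z A \<Longrightarrow> x * y \<in> quasilocal z A"
    unfolding Q by (rule closure_binop[where f="(*)"]) (use mulU in \<open>auto intro!: continuous_intros\<close>)
  show "\<And>x r. x \<in> quasilocal z A \<Longrightarrow> r *\<^sub>R x \<in> quasilocal z A"
    unfolding Q by (rule closure_unop) (use scU in \<open>auto intro!: continuous_intros\<close>)
  show "\<And>x. x \<in> quasilocal z A \<Longrightarrow> st x \<in> quasilocal z A"
    unfolding Q by (rule closure_unop) (use stU linear_continuous_on[OF st_bl[OF sa]] in auto)
qed

lemma net_parts: assumes "net_of_subfactors st ii z N M"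
  shows "star_algebra st ii \<and> z \<in> S1 \<and> (\<forall>I\<in>Jz z. star_subalgebra st ii (N I)) \<and> (\<forall>I\<in>Jz z. star_subalgebra st ii (M I))
    \<and> (\<forall>I\<in>Jz z. N I \<subseteq> M I) \<and> (\<forall>I\<in>Jz z. \<forall>J\<in>Jz z. I \<subseteq> J \<longrightarrow> N I \<subseteq> N J)
    \<and> (\<forall>I\<in>Jz z. \<forall>J\<in>Jz z. I \<subseteq> J \<longrightarrow> M I \<subseteq> M J)"
  using assms unfolding net_of_subfactors_def by meson

theorem lemma3p18:
  fixes st :: "'a::real_normed_algebra_1 \<Rightarrow> 'a" and ii :: 'a
    and z :: complex and N M :: "complex set \<Rightarrow> 'a set"
    and Io :: "complex set" and \<gamma> \<beta> :: "'a \<Rightarrow> 'a"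
  assumes net: "net_of_subfactors st ii z N M"
    and Io: "Io \<in> Jz z"
    and gamma_endo: "star_endo st ii (quasilocal z M) \<gamma>"
    and gamma_range: "\<gamma> ` quasilocal z M \<subseteq> quasilocal z N"
    and theta: "(\<lambda>x. if x \<in> quasilocal z N then \<gamma> x else x) \<in> Delta st ii z N Io"
    and beta_endo: "star_endo st ii (quasilocal z M) \<beta>"
    and beta_loc: "localized_in z M \<beta> Io"
    and beta_transp: "\<forall>I1\<in>Jz z. \<exists>Q. unitary_in st (quasilocal z M) Q \<and>
                          localized_in z M (Ad st Q \<circ> \<beta>) I1"
  shows "(\<lambda>x. if x \<in> quasilocal z N then \<gamma> (\<beta> x) else x) \<in> Delta st ii z N Io \<and>
    (\<forall>I1\<in>Jz z. \<forall>Q u. unitary_in st (quasilocal z M) Q \<longrightarrow>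
        localized_in z M (Ad st Q \<circ> \<beta>) I1 \<longrightarrow>
        unitary_in st (quasilocal z N) u \<longrightarrow>
        localized_in z N (Ad st u \<circ> \<gamma>) I1 \<longrightarrow>
        localized_in z N (Ad st (u * \<gamma> Q) \<circ> (\<lambda>x. \<gamma> (\<beta> x))) I1)"
proof -
  define QN where "QN = quasilocal z N"
  define QM where "QM = quasilocal z M"
  define \<sigma> where "\<sigma> = (\<lambda>x. if x \<in> QN then \<gamma> (\<beta> x) else x)"
  define \<theta> where "\<theta> = (\<lambda>x. if x \<in> QN then \<gamma> x else x)"
  have sa: "star_algebra st ii" and zS: "z \<in> S1"
    and subN: "\<forall>I\<in>Jz z. star_subalgebra st ii (N I)" and subM: "\<forall>I\<in>Jz z. star_subalgebra st ii (M I)"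
    and NM: "\<forall>I\<in>Jz z. N I \<subseteq> M I"
    and monoN: "\<forall>I\<in>Jz z. \<forall>J\<in>Jz z. I \<subseteq> J \<longrightarrow> N I \<subseteq> N J"
    and monoM: "\<forall>I\<in>Jz z. \<forall>J\<in>Jz z. I \<subseteq> J \<longrightarrow> M I \<subseteq> M J"
    using net_parts[OF net] by auto
  note qN = quasilocal_alg[OF sa zS Io subN monoN, folded QN_def]
  note qM = quasilocal_alg[OF sa zS Io subM monoM, folded QM_def]
  have st_invol: "\<And>x. st (st x) = x" and st_mult: "\<And>x y. st (x * y) = st y * st x"
    using sa unfolding star_algebra_def by blast+
  have QNM: "QN \<subseteq> QM" unfolding QN_def QM_def quasilocal_def
    using NM by (intro closure_mono UN_mono) auto
  have NQN: "\<And>J x. J \<in> Jz z \<Longrightarrow> x \<in> N J \<Longrightarrow> x \<in> QN"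
    unfolding QN_def quasilocal_def using closure_subset[of "\<Union> (N ` Jz z)"] by blast
  have MQM: "\<And>J x. J \<in> Jz z \<Longrightarrow> x \<in> M J \<Longrightarrow> x \<in> QM"
    unfolding QM_def quasilocal_def using closure_subset[of "\<Union> (M ` Jz z)"] by blast
  have gR: "\<And>x. x \<in> QM \<Longrightarrow> \<gamma> x \<in> QN" using gamma_range unfolding QN_def QM_def by blast
  have gM: "\<And>x. x \<in> QM \<Longrightarrow> \<gamma> x \<in> QM" using gR QNM by blast
  have g_add: "\<And>x y. x \<in> QM \<Longrightarrow> y \<in> QM \<Longrightarrow> \<gamma> (x + y) = \<gamma> x + \<gamma> y"
   and g_mul: "\<And>x y. x \<in> QM \<Longrightarrow> y \<in> QM \<Longrightarrow> \<gamma> (x * y) = \<gamma> x * \<gamma> y"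
   and g_sc: "\<And>x r. x \<in> QM \<Longrightarrow> \<gamma> (r *\<^sub>R x) = r *\<^sub>R \<gamma> x"
   and g_ii: "\<And>x. x \<in> QM \<Longrightarrow> \<gamma> (ii * x) = ii * \<gamma> x"
   and g_st: "\<And>x. x \<in> QM \<Longrightarrow> \<gamma> (st x) = st (\<gamma> x)"
   and g_1: "\<gamma> 1 = 1"
    using gamma_endo unfolding star_endo_def QM_def by blast+
  have bM: "\<And>x. x \<in> QM \<Longrightarrow> \<beta> x \<in> QM"
   and b_add: "\<And>x y. x \<in> QM \<Longrightarrow> y \<in> QM \<Longrightarrow> \<beta> (x + y) = \<beta> x + \<beta> y"
   and b_mul: "\<And>x y. x \<in> QM \<Longrightarrow> y \<in> QM \<Longrightarrow> \<beta> (x * y) = \<beta> x * \<beta> y"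
   and b_sc: "\<And>x r. x \<in> QM \<Longrightarrow> \<beta> (r *\<^sub>R x) = r *\<^sub>R \<beta> x"
   and b_ii: "\<And>x. x \<in> QM \<Longrightarrow> \<beta> (ii * x) = ii * \<beta> x"
   and b_st: "\<And>x. x \<in> QM \<Longrightarrow> \<beta> (st x) = st (\<beta> x)"
   and b_1: "\<beta> 1 = 1"
    using beta_endo unfolding star_endo_def QM_def by blast+
  have thD: "\<theta> \<in> Delta st ii z N Io" using theta unfolding \<theta>_def QN_def .
  have th_loc: "localized_in z N \<theta> Io"
   and th_tr: "\<forall>J\<in>Jz z. \<exists>u. unitary_in st QN u \<and> localized_in z N (Ad st u \<circ> \<theta>) J"
    using thD unfolding Delta_def QN_def by blast+
  
  have partB: "localized_in z N (Ad st (u * \<gamma> Q) \<circ> (\<lambda>x. \<gamma> (\<beta> x))) I1"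
    if I1: "I1 \<in> Jz z" and Qu: "unitary_in st QM Q" and Ql: "localized_in z M (Ad st Q \<circ> \<beta>) I1"
      and uu: "unitary_in st QN u" and ul: "localized_in z N (Ad st u \<circ> \<gamma>) I1" for I1 Q u
    unfolding localized_in_def
  proof (intro ballI impI)
    fix J x assume J: "J \<in> Jz z" "J \<subseteq> compl_int I1" and x: "x \<in> N J"
    have xM: "x \<in> M J" using x NM J by blast
    have xQM: "x \<in> QM" using MQM[OF J(1) xM] .
    have QQM: "Q \<in> QM" using Qu unfolding unitary_in_def by blast
    have sQ: "st Q \<in> QM" using qM(6) QQM by blast
    have bx: "\<beta> x \<in> QM" using bM xQM .
    have Qb: "Q * \<beta> x \<in> QM" using qM(4) QQM bx by blast
    have hQ: "Q * \<beta> x * st Q = x" using Ql J xM unfolding localized_in_def Ad_def by auto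
    have hu: "u * \<gamma> x * st u = x" using ul J x unfolding localized_in_def Ad_def by auto
    have "\<gamma> (Q * \<beta> x * st Q) = \<gamma> Q * \<gamma> (\<beta> x) * st (\<gamma> Q)"
      using g_mul[OF Qb sQ] g_mul[OF QQM bx] g_st[OF QQM] by simp
    hence h: "\<gamma> Q * \<gamma> (\<beta> x) * st (\<gamma> Q) = \<gamma> x" using hQ by simp
    have "(Ad st (u * \<gamma> Q) \<circ> (\<lambda>x. \<gamma> (\<beta> x))) x = u * (\<gamma> Q * \<gamma> (\<beta> x) * st (\<gamma> Q)) * st u"
      unfolding Ad_def by (simp add: st_mult mult.assoc)
    hence "(Ad st (u * \<gamma> Q) \<circ> (\<lambda>x. \<gamma> (\<beta> x))) x = u * \<gamma> x * st u" using h by simp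
    thus "(Ad st (u * \<gamma> Q) \<circ> (\<lambda>x. \<gamma> (\<beta> x))) x = x" using hu by simp
  qed
  
  have endo: "star_endo st ii QN \<sigma>"
    unfolding star_endo_def
  proof (intro conjI ballI allI)
    fix x assume x: "x \<in> QN"
    hence xm: "x \<in> QM" using QNM by blast
    show "\<sigma> x \<in> QN" using x gR[OF bM[OF xm]] unfolding \<sigma>_def by simp
    fix r show "\<sigma> (r *\<^sub>R x) = r *\<^sub>R \<sigma> x" using x xm qN(5)[OF x] unfolding \<sigma>_def
      by (simp add: b_sc g_sc bM)
  next
    fix x y assume x: "x \<in> QN" and y: "y \<in> QN"
    hence xm: "x \<in> QM" and ym: "y \<in> QM" using QNM by blast+
    show "\<sigma> (x + y) = \<sigma> x + \<sigma> y" using x y qN(3)[OF x y] unfolding \<sigma>_def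
      by (simp add: b_add g_add bM xm ym)
    show "\<sigma> (x * y) = \<sigma> x * \<sigma> y" using x y qN(4)[OF x y] unfolding \<sigma>_def
      by (simp add: b_mul g_mul bM xm ym)
  next
    fix x assume x: "x \<in> QN"
    hence xm: "x \<in> QM" using QNM by blast
    have iiQ: "ii \<in> QM" using qN(2) QNM by blast
    show "\<sigma> (ii * x) = ii * \<sigma> x" using x qN(4)[OF qN(2) x] unfolding \<sigma>_def
      by (simp add: b_ii g_ii bM xm)
    show "\<sigma> (st x) = st (\<sigma> x)" using x qN(6)[OF x] unfolding \<sigma>_def
      by (simp add: b_st g_st bM xm)
  next
    show "\<sigma> 1 = 1" using qN(1) unfolding \<sigma>_def by (simp add: b_1 g_1)
  qed
  have loc: "localized_in z N \<sigma> Io"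
    unfolding localized_in_def
  proof (intro ballI impI)
    fix J x assume J: "J \<in> Jz z" "J \<subseteq> compl_int Io" and x: "x \<in> N J"
    have xQ: "x \<in> QN" using NQN J x by blast
    have "\<beta> x = x" using beta_loc J x NM unfolding localized_in_def by blast
    moreover have "\<theta> x = x" using th_loc J x unfolding localized_in_def by blast
    ultimately show "\<sigma> x = x" using xQ unfolding \<sigma>_def \<theta>_def by simp
  qed
  have transp: "\<exists>w. unitary_in st QN w \<and> localized_in z N (Ad st w \<circ> \<sigma>) J" if J: "J \<in> Jz z" for J
  proof -
    obtain Q where Qu: "unitary_in st QM Q" and Ql: "localized_in z M (Ad st Q \<circ> \<beta>) J"
      using beta_transp J unfolding QM_def by blast
    obtain u where uu: "unitary_in st QN u" and ul0: "localized_in z N (Ad st u \<circ> \<theta>) J"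
      using th_tr J by blast
    have ul: "localized_in z N (Ad st u \<circ> \<gamma>) J"
      using ul0 NQN unfolding localized_in_def \<theta>_def by auto
    have B: "localized_in z N (Ad st (u * \<gamma> Q) \<circ> (\<lambda>x. \<gamma> (\<beta> x))) J" using partB[OF J Qu Ql uu ul] .
    have QQM: "Q \<in> QM" and sQQ: "st Q * Q = 1" and QsQ: "Q * st Q = 1"
      using Qu unfolding unitary_in_def by blast+
    have uQ: "u \<in> QN" and suu: "st u * u = 1" and usu: "u * st u = 1"
      using uu unfolding unitary_in_def by blast+
    have sQ: "st Q \<in> QM" using qM(6) QQM by blast
    have w: "u * \<gamma> Q \<in> QN" using qN(4)[OF uQ gR[OF QQM]] .
    have "st (u * \<gamma> Q) * (u * \<gamma> Q) = \<gamma> (st Q) * (st u * u) * \<gamma> Q"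
      by (simp add: st_mult g_st[OF QQM] mult.assoc)
    also have "\<dots> = \<gamma> (st Q * Q)" by (simp add: suu g_mul[OF sQ QQM])
    finally have w1: "st (u * \<gamma> Q) * (u * \<gamma> Q) = 1" using sQQ g_1 by simp
    have "(u * \<gamma> Q) * st (u * \<gamma> Q) = u * \<gamma> (Q * st Q) * st u"
      by (simp add: st_mult g_st[OF QQM] g_mul[OF QQM sQ] mult.assoc)
    hence w2: "(u * \<gamma> Q) * st (u * \<gamma> Q) = 1" using QsQ g_1 usu by simp
    have "localized_in z N (Ad st (u * \<gamma> Q) \<circ> \<sigma>) J"
      using B NQN unfolding localized_in_def \<sigma>_def by auto
    thus ?thesis using w w1 w2 unfolding unitary_in_def by blast
  qed
  have "\<sigma> \<in> Delta st ii z N Io"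
    unfolding Delta_def using endo loc transp unfolding QN_def by blast
  moreover have "\<forall>I1\<in>Jz z. \<forall>Q u. unitary_in st (quasilocal z M) Q \<longrightarrow>
        localized_in z M (Ad st Q \<circ> \<beta>) I1 \<longrightarrow>
        unitary_in st (quasilocal z N) u \<longrightarrow>
        localized_in z N (Ad st u \<circ> \<gamma>) I1 \<longrightarrow>
        localized_in z N (Ad st (u * \<gamma> Q) \<circ> (\<lambda>x. \<gamma> (\<beta> x))) I1"
    using partB unfolding QN_def QM_def by blast
  ultimately show ?thesis unfolding \<sigma>_def QN_def by simp
qed

end
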